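(* Assume (STAB). There exist constants $\lambda_{d,R}$ ($R>2$) such that $$\langle\delta^2E(\hat y+\Pi_Ru)v,v\rangle\ge\lambda_{d,R}\|Dv\|_{\ell^2}^2\qquad\text{for all }v\in\mathscr W_0(\Lambda),$$ and $\lambda_{d,R}\to\lambda_d>0$ as $R\to\infty$.
   Context: Lattice $\Lambda:=\tfrac{a_1+a_2}{3}+\{ma_1+na_2:m,n\in\mathbb Z\}$, $a_1=(1,0)^T$, $a_2=(\tfrac12,\tfrac{\sqrt3}2)^T$; bonds $\mathcal B$ oriented nearest-neighbour pairs; cells: triangles of mutually nearest-neighbour lattice points; $C_0$ the cell with barycentre $0$. $Dy_b:=y(\eta)-y(\xi)$; $\xi_0=(0,\sqrt3/3)^T$; $\mathscr W_0(\Lambda)=\{v:v(\xi_0)=0,\mathrm{supp}(Dv)\text{ bounded}\}$; $\dot{\mathscr W}^{1,2}(\Lambda)=\{v:v(\xi_0)=0,Dv\in\ell^2(\mathcal B)\}$. $\psi\in C^4(\mathbb R)$, $1$-periodic, even; $E(y;\tilde y):=\sum_{b\in\mathcal B}[\psi(Dy_b)-\psi(D\tilde y_b)]$; $\langle\delta^2E(y)v,w\rangle:=\sum_b\psi''(Dy_b)Dv_bDw_b$. $\hat y(x)=\frac1{2\pi}\arg(x)$ (branch cut on positive $x_1$-axis). (STAB): there is $u\in\dot{\mathscr W}^{1,2}(\Lambda)$ such that $\hat y+u$ is a strongly stable equilibrium of $E$ (locally minimal among perturbations $w\in\mathscr W_0(\Lambda)$ with small $\|Dw\|_{\ell^2}$,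 and $\langle\delta^2E(\hat y+u)v,v\rangle\ge\lambda_d\|Dv\|_{\ell^2}^2$ for all $v\in\mathscr W_0(\Lambda)$, with $\lambda_d>0$ fixed). Truncation: $\eta\in C^1(\mathbb R^2)$ with $\eta=1$ on $|x|\le\frac34$, $\eta=0$ on $|x|\ge1$; $Iu$ the piecewise affine interpolant of $u$ over the cells; $A_R:=B_R(0)\setminus B_{R/2+1}(0)$; $\Pi_Ru(\xi):=\eta(\xi/R)(u(\xi)-a_R)$ with $a_R$ the average of $Iu$ over $A_R$. *)

theory Defs
  imports "HOL-Analysis.Analysis"
begin

text \<open>Points of R^2 are represented as complex numbers: (x1,x2) corresponds to x1 + i x2.\<close>

definition a1 :: complex where "a1 = Complex 1 0"
definition a2 :: complex where "a2 = Complex (1/2) (sqrt 3 / 2)"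

definition Lat :: "complex set" where
  "Lat = {(a1 + a2) / 3 + of_int m * a1 + of_int n * a2 | m n. True}"

definition Bonds :: "(complex \<times> complex) set" where
  "Bonds = {(xi, eta). xi \<in> Lat \<and> eta \<in> Lat \<and> dist xi eta = 1}"

definition Dif :: "(complex \<Rightarrow> real) \<Rightarrow> complex \<times> complex \<Rightarrow> real" where
  "Dif y b = y (snd b) - y (fst b)"

definition xi0 :: complex where "xi0 = Complex 0 (sqrt 3 / 3)"

definition W0 :: "(complex \<Rightarrow> real) set" where
  "W0 = {v. v xi0 = 0 \<and> bounded {b \<in> Bonds. Dif v b \<noteq> 0}}"

definition W12 :: "(complex \<Rightarrow> real) set" where
  "W12 = {v. v xi0 = 0 \<and> (\<lambda>b. (Dif v b)\<^sup>2) summable_on Bonds}"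

definition normD2 :: "(complex \<Rightarrow> real) \<Rightarrow> real" where
  "normD2 v = (\<Sum>\<^sub>\<infinity> b\<in>Bonds. (Dif v b)\<^sup>2)"

definition C_k :: "nat \<Rightarrow> (real \<Rightarrow> real) \<Rightarrow> bool" where
  "C_k k f \<longleftrightarrow> (\<forall>j<k. \<forall>x. (deriv ^^ j) f differentiable (at x))
                 \<and> continuous_on UNIV ((deriv ^^ k) f)"

definition Energy :: "(real \<Rightarrow> real) \<Rightarrow> (complex \<Rightarrow> real) \<Rightarrow> (complex \<Rightarrow> real) \<Rightarrow> real" where
  "Energy \<psi> y y' = (\<Sum>\<^sub>\<infinity> b\<in>Bonds. \<psi> (Dif y b) - \<psi> (Dif y' b))"

definition hess :: "(real \<Rightarrow> real) \<Rightarrow> (complex \<Rightarrow> real) \<Rightarrow> (complex \<Rightarrow> real) \<Rightarrow> (complex \<Rightarrow> real) \<Rightarrow> real" where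
  "hess \<psi> y v w = (\<Sum>\<^sub>\<infinity> b\<in>Bonds. (deriv ^^ 2) \<psi> (Dif y b) * Dif v b * Dif w b)"

definition yhat :: "complex \<Rightarrow> real" where
  "yhat x = Arg2pi x / (2 * pi)"

definition strongly_stable :: "(real \<Rightarrow> real) \<Rightarrow> real \<Rightarrow> (complex \<Rightarrow> real) \<Rightarrow> bool" where
  "strongly_stable \<psi> lam y \<longleftrightarrow>
     (\<exists>\<epsilon>>0. \<forall>w\<in>W0. sqrt (normD2 w) < \<epsilon> \<longrightarrow> Energy \<psi> (\<lambda>x. y x + w x) y \<ge> 0)
   \<and> (\<forall>v\<in>W0. hess \<psi> y v v \<ge> lam * normD2 v)"

definition is_cell :: "complex \<Rightarrow> complex \<Rightarrow> complex \<Rightarrow> bool" where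
  "is_cell p q r \<longleftrightarrow> p \<in> Lat \<and> q \<in> Lat \<and> r \<in> Lat
      \<and> dist p q = 1 \<and> dist q r = 1 \<and> dist p r = 1"

text \<open>Piecewise affine interpolant over the cells (barycentric interpolation;
  well defined since adjacent cells agree on shared edges).\<close>
definition interp :: "(complex \<Rightarrow> real) \<Rightarrow> complex \<Rightarrow> real" where
  "interp u x = (SOME val. \<exists>p q r \<alpha> \<beta> \<gamma>. is_cell p q r \<and> \<alpha> \<ge> 0 \<and> \<beta> \<ge> 0 \<and> \<gamma> \<ge> 0
       \<and> \<alpha> + \<beta> + \<gamma> = 1 \<and> x = of_real \<alpha> * p + of_real \<beta> * q + of_real \<gamma> * r
       \<and> val = \<alpha> * u p + \<beta> * u q + \<gamma> * u r)"

definition annulus :: "real \<Rightarrow> complex set" where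
  "annulus R = ball 0 R - ball 0 (R / 2 + 1)"

definition avgR :: "real \<Rightarrow> (complex \<Rightarrow> real) \<Rightarrow> real" where
  "avgR R u = integral (annulus R) (interp u) / Henstock_Kurzweil_Integration.content (annulus R)"

definition truncR :: "(complex \<Rightarrow> real) \<Rightarrow> real \<Rightarrow> (complex \<Rightarrow> real) \<Rightarrow> complex \<Rightarrow> real" where
  "truncR \<eta> R u xi = \<eta> (xi / of_real R) * (u xi - avgR R u)"

definition cutoff :: "(complex \<Rightarrow> real) \<Rightarrow> bool" where
  "cutoff \<eta> \<longleftrightarrow> (\<exists>\<eta>'. (\<forall>x. (\<eta> has_derivative blinfun_apply (\<eta>' x)) (at x)) \<and> continuous_on UNIV \<eta>')
     \<and> (\<forall>x. norm x \<le> 3/4 \<longrightarrow> \<eta> x = 1) \<and> (\<forall>x. norm x \<ge> 1 \<longrightarrow> \<eta> x = 0)"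

end

theory Submission
  imports Defs "HOL-Real_Asymp.Real_Asymp"
begin


definition p0 :: complex where "p0 = (a1 + a2) / 3"

lemma norm_a1[simp]: "norm a1 = 1" by (simp add: a1_def cmod_def)
lemma norm_a2[simp]: "norm a2 = 1"
  by (simp add: a2_def cmod_def power_divide)

lemma Lat_iff: "p \<in> Lat \<longleftrightarrow> (\<exists>m n. p = p0 + of_int m * a1 + of_int n * a2)"
  unfolding Lat_def p0_def by auto

lemma Lat_a1: "p \<in> Lat \<Longrightarrow> p + of_int k * a1 \<in> Lat"
  unfolding Lat_iff
  by (clarsimp, rule_tac x="m+k" in exI, rule_tac x=n in exI, simp add: algebra_simps)
lemma Lat_a2: "p \<in> Lat \<Longrightarrow> p + of_int k * a2 \<in> Lat"
  unfolding Lat_iff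
  by (clarsimp, rule_tac x="m" in exI, rule_tac x="n+k" in exI, simp add: algebra_simps)

lemma p0_Lat: "p0 \<in> Lat" unfolding Lat_iff by (rule exI[of _ 0], rule exI[of _ 0]) simp

lemma coord_bound:
  assumes "p = p0 + of_int m * a1 + of_int n * a2"
  shows "\<bar>real_of_int m\<bar> \<le> 2 * (norm p + 1) \<and> \<bar>real_of_int n\<bar> \<le> 2 * (norm p + 1)"
proof -
  have s3: "sqrt 3 \<ge> 1" by simp
  have s3b: "sqrt 3 \<le> 2" by (smt (verit) real_sqrt_le_mono real_sqrt_four)
  have im: "Im p = sqrt 3 / 6 + n * (sqrt 3 / 2)" using assms
    by (simp add: p0_def a1_def a2_def)
  have re: "Re p = 1/2 + m + n/2" using assms
    by (simp add: p0_def a1_def a2_def)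
  have "\<bar>Im p\<bar> \<le> norm p" by (rule abs_Im_le_cmod)
  moreover have "\<bar>Re p\<bar> \<le> norm p" by (rule abs_Re_le_cmod)
  ultimately have "\<bar>sqrt 3 / 6 + n * (sqrt 3 / 2)\<bar> \<le> norm p" "\<bar>1/2 + m + n/2\<bar> \<le> norm p"
    using im re by auto
  then have h: "\<bar>real_of_int n * (sqrt 3 / 2)\<bar> \<le> norm p + sqrt 3 / 6" 
  proof -
    have "\<bar>real_of_int n * (sqrt 3 / 2)\<bar> = \<bar>(sqrt 3 / 6 + real_of_int n * (sqrt 3 / 2)) - sqrt 3 / 6\<bar>" by simp
    also have "\<dots> \<le> \<bar>sqrt 3 / 6 + real_of_int n * (sqrt 3 / 2)\<bar> + \<bar>sqrt 3 / 6\<bar>" by (rule abs_triangle_ineq4)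
    finally show ?thesis using \<open>\<bar>sqrt 3 / 6 + n * (sqrt 3 / 2)\<bar> \<le> norm p\<close> by simp
  qed
  have "\<bar>real_of_int n * (sqrt 3 / 2)\<bar> = \<bar>real_of_int n\<bar> * (sqrt 3 / 2)" by (simp add: abs_mult)
  also have "\<dots> \<ge> \<bar>real_of_int n\<bar> * (1/2)" using s3 by (intro mult_left_mono) auto
  finally have "\<bar>real_of_int n\<bar> / 2 \<le> norm p + 1" using h s3b by linarith
  then have n: "\<bar>real_of_int n\<bar> \<le> 2 * (norm p + 1)" by (simp add: field_simps)
  then show ?thesis using \<open>\<bar>1/2 + m + n/2\<bar> \<le> norm p\<close> by (auto simp: abs_le_iff)
qed

lemma Bonds_iff: "(x, y) \<in> Bonds \<longleftrightarrow> x \<in> Lat \<and> y \<in> Lat \<and> dist x y = 1"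
  by (simp add: Bonds_def)

lemma sq_le_normD2:
  assumes sum: "(\<lambda>b. (Dif u b)\<^sup>2) summable_on Bonds" and F: "finite F" "F \<subseteq> Bonds"
  shows "(\<Sum>b\<in>F. (Dif u b)\<^sup>2) \<le> normD2 u"
  unfolding normD2_def by (rule finite_sum_le_infsum[OF sum F]) auto

lemma seg:
  assumes sum: "(\<lambda>b. (Dif u b)\<^sup>2) summable_on Bonds" and q: "q \<in> Lat"
    and dL: "\<And>p. p \<in> Lat \<Longrightarrow> p + d \<in> Lat" and nd: "norm d = 1"
  shows "\<bar>u (q + of_nat N * d) - u q\<bar> \<le> sqrt (real N) * sqrt (normD2 u)"
proof -
  define pt where "pt k = q + of_nat k * d" for k :: nat
  have ptL: "pt k \<in> Lat" for k
  proof (induction k)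
    case 0 then show ?case by (simp add: pt_def q)
  next
    case (Suc k)
    have "pt (Suc k) = pt k + d" by (simp add: pt_def algebra_simps)
    then show ?case using dL[OF Suc] by simp
  qed
  define bd where "bd k = (pt k, pt (Suc k))" for k
  have bdB: "bd k \<in> Bonds" for k
  proof -
    have "dist (pt k) (pt (Suc k)) = 1"
      using nd by (simp add: pt_def dist_norm algebra_simps norm_minus_commute)
    then show ?thesis using ptL[of k] ptL[of "Suc k"] by (simp add: bd_def Bonds_iff)
  qed
  have inj: "inj_on bd {..<N}"
  proof (rule inj_onI)
    fix i j assume "bd i = bd j"
    then have "of_nat i * d = of_nat j * d" by (simp add: bd_def pt_def)
    then show "i = j" using nd by auto
  qed
  have tel: "u (q + of_nat N * d) - u q = (\<Sum>k<N. Dif u (bd k))"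
    using sum_lessThan_telescope[of "\<lambda>k. u (pt k)" N]
    by (simp add: Dif_def bd_def pt_def)
  have "(\<Sum>k<N. Dif u (bd k))\<^sup>2 \<le> (\<Sum>k<N. (Dif u (bd k))\<^sup>2) * real N"
    using sum_squared_le_sum_of_squares[of "\<lambda>k. Dif u (bd k)" "{..<N}"] by simp
  also have "(\<Sum>k<N. (Dif u (bd k))\<^sup>2) = (\<Sum>b\<in>bd ` {..<N}. (Dif u b)\<^sup>2)"
    by (simp add: sum.reindex[OF inj])
  also have "\<dots> \<le> normD2 u" by (rule sq_le_normD2[OF sum]) (use bdB in auto)
  finally have "(u (q + of_nat N * d) - u q)\<^sup>2 \<le> normD2 u * real N"
    unfolding tel by (simp add: mult_right_mono)
  then have "sqrt ((u (q + of_nat N * d) - u q)\<^sup>2) \<le> sqrt (normD2 u * real N)"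
    using real_sqrt_le_mono by blast
  then show ?thesis by (simp add: real_sqrt_mult mult.commute)
qed

lemma seg_int:
  assumes sum: "(\<lambda>b. (Dif u b)\<^sup>2) summable_on Bonds" and q: "q \<in> Lat"
    and dL: "\<And>p k. p \<in> Lat \<Longrightarrow> p + of_int k * d \<in> Lat" and nd: "norm d = 1"
  shows "\<bar>u (q + of_int k * d) - u q\<bar> \<le> sqrt \<bar>real_of_int k\<bar> * sqrt (normD2 u)"
proof (cases "k \<ge> 0")
  case True
  have "p + d \<in> Lat" if "p \<in> Lat" for p using dL[OF that, of 1] by simp
  from seg[OF sum q this nd, of "nat k"] True show ?thesis by simp
next
  case False
  have "p + (- d) \<in> Lat" if "p \<in> Lat" for p using dL[OF that, of "-1"] by simp
  from seg[OF sum q this, of "nat (-k)"] False nd show ?thesis by simp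
qed

lemma growth:
  assumes sum: "(\<lambda>b. (Dif u b)\<^sup>2) summable_on Bonds" and xi: "xi \<in> Lat"
  shows "\<bar>u xi - u p0\<bar> \<le> 3 * sqrt (norm xi + 1) * sqrt (normD2 u)"
proof -
  obtain m n where e: "xi = p0 + of_int m * a1 + of_int n * a2" using xi Lat_iff by blast
  have cb: "\<bar>real_of_int m\<bar> \<le> 2 * (norm xi + 1)" "\<bar>real_of_int n\<bar> \<le> 2 * (norm xi + 1)"
    using coord_bound[OF e] by auto
  define q where "q = p0 + of_int m * a1"
  have qL: "q \<in> Lat" unfolding q_def by (rule Lat_a1[OF p0_Lat])
  have h1: "\<bar>u q - u p0\<bar> \<le> sqrt \<bar>real_of_int m\<bar> * sqrt (normD2 u)"
    unfolding q_def by (rule seg_int[OF sum p0_Lat]) (auto intro: Lat_a1)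
  have h2: "\<bar>u xi - u q\<bar> \<le> sqrt \<bar>real_of_int n\<bar> * sqrt (normD2 u)"
    unfolding e q_def[symmetric] by (rule seg_int[OF sum qL]) (auto intro: Lat_a2)
  have G: "sqrt (normD2 u) \<ge> 0" using sq_le_normD2[OF sum, of "{}"] by simp
  have s12: "sqrt \<bar>real_of_int m\<bar> \<le> sqrt (2 * (norm xi + 1))" "sqrt \<bar>real_of_int n\<bar> \<le> sqrt (2 * (norm xi + 1))"
    using cb real_sqrt_le_mono by blast+
  have s3: "2 * sqrt (2 * (norm xi + 1)) \<le> 3 * sqrt (norm xi + 1)"
  proof -
    have "2 * sqrt 2 \<le> (3::real)"
      by (rule power2_le_imp_le) (auto simp: power_mult_distrib)
    moreover have "sqrt (2 * (norm xi + 1)) = sqrt 2 * sqrt (norm xi + 1)" by (rule real_sqrt_mult)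
    ultimately show ?thesis by (simp only: mult.assoc[symmetric]) (rule mult_right_mono, auto)
  qed
  have "sqrt \<bar>real_of_int m\<bar> + sqrt \<bar>real_of_int n\<bar> \<le> 3 * sqrt (norm xi + 1)"
    using s12 s3 by linarith
  then have "(sqrt \<bar>real_of_int m\<bar> + sqrt \<bar>real_of_int n\<bar>) * sqrt (normD2 u) \<le> 3 * sqrt (norm xi + 1) * sqrt (normD2 u)"
    using G by (rule mult_right_mono)
  then show ?thesis using h1 h2 by (simp add: algebra_simps)
qed

lemma Lat_cball_finite: "finite (Lat \<inter> cball 0 r)"
proof -
  define K where "K = \<lceil>2 * (r + 1)\<rceil>"
  have "Lat \<inter> cball 0 r \<subseteq> (\<lambda>(m,n). p0 + of_int m * a1 + of_int n * a2) ` ({-K..K} \<times> {-K..K})"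
  proof
    fix p assume p: "p \<in> Lat \<inter> cball 0 r"
    then obtain m n where e: "p = p0 + of_int m * a1 + of_int n * a2" using Lat_iff by blast
    have "norm p \<le> r" using p by auto
    then have "\<bar>real_of_int m\<bar> \<le> 2 * (r + 1)" "\<bar>real_of_int n\<bar> \<le> 2 * (r + 1)"
      using coord_bound[OF e] by auto
    then have "\<bar>m\<bar> \<le> K" "\<bar>n\<bar> \<le> K" unfolding K_def by linarith+
    then show "p \<in> (\<lambda>(m,n). p0 + of_int m * a1 + of_int n * a2) ` ({-K..K} \<times> {-K..K})"
      using e by (auto intro!: image_eqI[of _ _ "(m,n)"])
  qed
  then show ?thesis by (rule finite_subset) auto
qed

lemma bonds_bounded_finite:
  assumes "bounded X" "X \<subseteq> Bonds" shows "finite X"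
proof -
  obtain r where r: "\<And>b. b \<in> X \<Longrightarrow> norm b \<le> r" using assms(1) bounded_iff by blast
  have "X \<subseteq> (Lat \<inter> cball 0 r) \<times> (Lat \<inter> cball 0 r)"
  proof
    fix b assume b: "b \<in> X"
    obtain x y where bxy: "b = (x, y)" by (cases b)
    have "norm x \<le> r" "norm y \<le> r" using r[OF b] norm_fst_le[of x y] norm_snd_le[of y x] bxy by auto
    then show "b \<in> (Lat \<inter> cball 0 r) \<times> (Lat \<inter> cball 0 r)" using b assms(2) bxy by (auto simp: Bonds_iff)
  qed
  then show ?thesis by (rule finite_subset) (intro finite_cartesian_product Lat_cball_finite)
qed

lemma W0_finite: "v \<in> W0 \<Longrightarrow> finite {b \<in> Bonds. Dif v b \<noteq> 0}"
  unfolding W0_def by (rule bonds_bounded_finite) auto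

definition z0 :: real where "z0 = (SOME val. False)"

lemma vertex_close:
  fixes x p q r :: complex
  assumes "a \<ge> 0" "b \<ge> 0" "c \<ge> 0" "a + b + c = 1" "x = of_real a * p + of_real b * q + of_real c * r"
    "dist p q = 1" "dist q r = 1" "dist p r = 1"
  shows "norm p \<le> norm x + 1"
proof -
  have ae: "a = 1 - b - c" using assms(4) by simp
  have xp: "x - p = of_real b * (q - p) + of_real c * (r - p)"
    using assms(5) unfolding ae by (simp add: algebra_simps)
  have "norm (x - p) \<le> norm (of_real b * (q - p)) + norm (of_real c * (r - p))"
    unfolding xp by (rule norm_triangle_ineq)
  moreover have "norm (of_real b * (q - p)) = b"
    using assms(2,6) by (simp add: norm_mult dist_norm norm_minus_commute)
  moreover have "norm (of_real c * (r - p)) = c"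
    using assms(3,8) by (simp add: norm_mult dist_norm norm_minus_commute)
  moreover have "norm p \<le> norm x + norm (x - p)"
    using norm_triangle_ineq4[of x "x - p"] by simp
  ultimately show ?thesis using assms(1,4) by linarith
qed

lemma interp_bound:
  assumes sum: "(\<lambda>b. (Dif u b)\<^sup>2) summable_on Bonds"
  shows "\<bar>interp u x\<bar> \<le> \<bar>z0\<bar> + \<bar>u p0\<bar> + 3 * sqrt (norm x + 2) * sqrt (normD2 u)"
proof -
  define M where "M = \<bar>u p0\<bar> + 3 * sqrt (norm x + 2) * sqrt (normD2 u)"
  have G: "sqrt (normD2 u) \<ge> 0" using sq_le_normD2[OF sum, of "{}"] by simp
  have M0: "M \<ge> 0" unfolding M_def using G by auto
  have vb: "\<bar>u p\<bar> \<le> M" if "p \<in> Lat" "norm p \<le> norm x + 1" for p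
  proof -
    have "\<bar>u p - u p0\<bar> \<le> 3 * sqrt (norm p + 1) * sqrt (normD2 u)" by (rule growth[OF sum that(1)])
    also have "\<dots> \<le> 3 * sqrt (norm x + 2) * sqrt (normD2 u)"
      using that(2) G by (intro mult_right_mono) auto
    finally show ?thesis unfolding M_def by linarith
  qed
  define P where "P = (\<lambda>val. \<exists>p q r \<alpha> \<beta> \<gamma>. is_cell p q r \<and> \<alpha> \<ge> 0 \<and> \<beta> \<ge> 0 \<and> \<gamma> \<ge> 0
       \<and> \<alpha> + \<beta> + \<gamma> = 1 \<and> x = of_real \<alpha> * p + of_real \<beta> * q + of_real \<gamma> * r
       \<and> val = \<alpha> * u p + \<beta> * u q + \<gamma> * u r)"
  have iu: "interp u x = (SOME val. P val)" unfolding interp_def P_def by simp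
  show ?thesis
  proof (cases "\<exists>val. P val")
    case True
    then have "P (SOME val. P val)" by (rule someI_ex)
    then obtain p q r \<alpha> \<beta> \<gamma> where c: "is_cell p q r" "\<alpha> \<ge> 0" "\<beta> \<ge> 0" "\<gamma> \<ge> 0"
      "\<alpha> + \<beta> + \<gamma> = 1" "x = of_real \<alpha> * p + of_real \<beta> * q + of_real \<gamma> * r"
      and v: "(SOME val. P val) = \<alpha> * u p + \<beta> * u q + \<gamma> * u r" unfolding P_def by blast
    have cl: "is_cell p q r" using c by simp
    have Lp: "p \<in> Lat" "q \<in> Lat" "r \<in> Lat" and d: "dist p q = 1" "dist q r = 1" "dist p r = 1"
      using cl unfolding is_cell_def by auto
    have np: "norm p \<le> norm x + 1"
      by (rule vertex_close[OF c(2-6) d])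
    have nq: "norm q \<le> norm x + 1"
      by (rule vertex_close[of \<beta> \<gamma> \<alpha> x q r p]) (use c d in \<open>auto simp: dist_commute algebra_simps\<close>)
    have nr: "norm r \<le> norm x + 1"
      by (rule vertex_close[of \<gamma> \<alpha> \<beta> x r p q]) (use c d in \<open>auto simp: dist_commute algebra_simps\<close>)
    have "\<bar>\<alpha> * u p + \<beta> * u q + \<gamma> * u r\<bar> \<le> \<alpha> * \<bar>u p\<bar> + \<beta> * \<bar>u q\<bar> + \<gamma> * \<bar>u r\<bar>"
    proof -
      have "\<bar>\<alpha> * u p + \<beta> * u q + \<gamma> * u r\<bar> \<le> \<bar>\<alpha> * u p\<bar> + \<bar>\<beta> * u q\<bar> + \<bar>\<gamma> * u r\<bar>"
        by (rule order_trans[OF abs_triangle_ineq add_mono[OF abs_triangle_ineq order_refl]])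
      then show ?thesis using c by (simp add: abs_mult)
    qed
    also have "\<dots> \<le> \<alpha> * M + \<beta> * M + \<gamma> * M"
      using c vb[OF Lp(1) np] vb[OF Lp(2) nq] vb[OF Lp(3) nr]
      by (intro add_mono mult_left_mono) auto
    also have "\<dots> = (\<alpha> + \<beta> + \<gamma>) * M" by (simp only: distrib_right)
    also have "\<dots> = M" using c(5) by simp
    finally show ?thesis using iu v unfolding M_def by simp
  next
    case False
    then have "P = (\<lambda>_. False)" by auto
    then have "interp u x = z0" using iu by (simp add: z0_def)
    then show ?thesis using M0 unfolding M_def by simp
  qed
qed



lemma avg_bound:
  assumes sum: "(\<lambda>b. (Dif u b)\<^sup>2) summable_on Bonds" and R: "R > 0"
  shows "\<bar>avgR R u\<bar> \<le> \<bar>z0\<bar> + \<bar>u p0\<bar> + 3 * sqrt (R + 2) * sqrt (normD2 u)"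
proof -
  define M where "M = \<bar>z0\<bar> + \<bar>u p0\<bar> + 3 * sqrt (R + 2) * sqrt (normD2 u)"
  define S where "S = annulus R"
  have G: "sqrt (normD2 u) \<ge> 0" using sq_le_normD2[OF sum, of "{}"] by simp
  have M0: "M \<ge> 0" unfolding M_def using G R by auto
  have fb: "\<bar>interp u x\<bar> \<le> M" if "x \<in> S" for x
  proof -
    have "norm x < R" using that by (simp add: S_def annulus_def)
    then have "3 * sqrt (norm x + 2) * sqrt (normD2 u) \<le> 3 * sqrt (R + 2) * sqrt (normD2 u)"
      using G by (intro mult_right_mono) auto
    then show ?thesis using interp_bound[OF sum, of x] unfolding M_def by linarith
  qed
  have Sb: "S \<in> sets lborel" unfolding S_def annulus_def by auto
  have Sl: "S \<in> lmeasurable" unfolding S_def annulus_def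
    by (rule fmeasurable_Diff) auto
  have cS: "Henstock_Kurzweil_Integration.content S = integral S (\<lambda>x. 1::real)"
    using lmeasure_integral[OF Sl] measure_completion[OF Sb] by simp
  have cS0: "Henstock_Kurzweil_Integration.content S \<ge> 0" by simp
  have ib: "\<bar>integral S (interp u)\<bar> \<le> M * Henstock_Kurzweil_Integration.content S"
  proof (cases "interp u integrable_on S")
    case True
    have "norm (integral S (interp u)) \<le> integral S (\<lambda>x. M)"
      by (rule integral_norm_bound_integral[OF True integrable_on_const[OF Sl]]) (use fb in auto)
    also have "integral S (\<lambda>x. M) = M * integral S (\<lambda>x. 1::real)"
      using integral_mult[OF integrable_on_const[OF Sl], of M 1] by simp
    finally show ?thesis using cS by simp
  next
    case False
    then show ?thesis using M0 cS0 by (simp add: not_integrable_integral)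
  qed
  show ?thesis
  proof (cases "Henstock_Kurzweil_Integration.content S = 0")
    case True then show ?thesis using M0 unfolding M_def by (simp add: avgR_def S_def[symmetric])
  next
    case False
    then have "Henstock_Kurzweil_Integration.content S > 0" using cS0 by linarith
    then show ?thesis using ib unfolding avgR_def S_def[symmetric] M_def[symmetric]
      by (simp add: abs_div divide_le_eq)
  qed
qed



lemma eta_props:
  assumes "cutoff \<eta>"
  obtains B where "B \<ge> 0" "\<And>x y. norm (x - y) \<le> 1/2 \<Longrightarrow> \<bar>\<eta> x - \<eta> y\<bar> \<le> B * norm (x - y)"
    "\<And>x. \<bar>\<eta> x\<bar> \<le> 1 + B" "\<And>x. norm x \<le> 3/4 \<Longrightarrow> \<eta> x = 1" "\<And>x. norm x \<ge> 1 \<Longrightarrow> \<eta> x = 0"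
proof -
  obtain \<eta>' where d: "\<And>x. (\<eta> has_derivative blinfun_apply (\<eta>' x)) (at x)" and c: "continuous_on UNIV \<eta>'"
    and one: "\<And>x. norm x \<le> 3/4 \<Longrightarrow> \<eta> x = 1" and zero: "\<And>x. norm x \<ge> 1 \<Longrightarrow> \<eta> x = 0"
    using assms unfolding cutoff_def by blast
  have "compact (\<eta>' ` cball 0 2)"
    by (rule compact_continuous_image) (use c continuous_on_subset in auto)
  then obtain B where B: "B > 0" "\<And>x. x \<in> cball 0 2 \<Longrightarrow> norm (\<eta>' x) \<le> B"
    using compact_imp_bounded bounded_pos by (metis imageI)
  have lipS: "\<bar>\<eta> x - \<eta> y\<bar> \<le> B * norm (x - y)" if "x \<in> cball 0 2" "y \<in> cball 0 2" for x y
  proof -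
    have "norm (\<eta> x - \<eta> y) \<le> B * norm (x - y)"
      by (rule differentiable_bound[of "cball 0 2" \<eta> "\<lambda>x. blinfun_apply (\<eta>' x)" B])
        (use that B d in \<open>auto intro: has_derivative_at_withinI simp: norm_blinfun.rep_eq[symmetric]\<close>)
    then show ?thesis by simp
  qed
  have lip: "\<bar>\<eta> x - \<eta> y\<bar> \<le> B * norm (x - y)" if "norm (x - y) \<le> 1/2" for x y
  proof (cases "x \<in> cball 0 2 \<and> y \<in> cball 0 2")
    case True then show ?thesis using lipS by auto
  next
    case False
    have "norm x \<le> norm y + norm (x - y)" "norm y \<le> norm x + norm (x - y)"
      using norm_triangle_ineq4[of x "x - y"] norm_triangle_ineq4[of y "y - x"]
      by (auto simp: norm_minus_commute)
    then have "norm x \<ge> 1" "norm y \<ge> 1" using False that by auto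
    then show ?thesis using zero B by simp
  qed
  have bd: "\<bar>\<eta> x\<bar> \<le> 1 + B" for x
  proof (cases "norm x \<ge> 1")
    case True then show ?thesis using zero B by simp
  next
    case False
    then have "\<bar>\<eta> x - \<eta> 0\<bar> \<le> B * norm (x - 0)" using lipS[of x 0] by auto
    moreover have "B * norm x \<le> B" using False B by (simp add: mult_left_le)
    ultimately show ?thesis using one[of 0] by simp
  qed
  show ?thesis by (rule that[of B]) (use B lip bd one zero in auto)
qed



lemma du_decay:
  assumes sum: "(\<lambda>b. (Dif u b)\<^sup>2) summable_on Bonds" and e: "\<epsilon> > 0"
  obtains \<rho> where "\<And>b. b \<in> Bonds \<Longrightarrow> norm (snd b) > \<rho> \<Longrightarrow> \<bar>Dif u b\<bar> < \<epsilon>"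
proof -
  define F where "F = {b \<in> Bonds. (Dif u b)\<^sup>2 \<ge> \<epsilon>\<^sup>2}"
  have fin: "finite F"
  proof (rule ccontr)
    assume inf: "infinite F"
    define N where "N = nat \<lceil>normD2 u / \<epsilon>\<^sup>2\<rceil> + 1"
    obtain F' where F': "finite F'" "card F' = N" "F' \<subseteq> F"
      using infinite_arbitrarily_large[OF inf] by blast
    have "(\<Sum>b\<in>F'. (Dif u b)\<^sup>2) \<ge> (\<Sum>b\<in>F'. \<epsilon>\<^sup>2)"
      using F' by (intro sum_mono) (auto simp: F_def)
    moreover have "(\<Sum>b\<in>F'. \<epsilon>\<^sup>2) = real N * \<epsilon>\<^sup>2" using F' by simp
    moreover have "(\<Sum>b\<in>F'. (Dif u b)\<^sup>2) \<le> normD2 u"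
      by (rule sq_le_normD2[OF sum F'(1)]) (use F' in \<open>auto simp: F_def\<close>)
    moreover have "real N * \<epsilon>\<^sup>2 > normD2 u"
    proof -
      have "real N > normD2 u / \<epsilon>\<^sup>2" unfolding N_def by linarith
      then show ?thesis using e by (simp add: divide_less_eq)
    qed
    ultimately show False by linarith
  qed
  define \<rho> where "\<rho> = (\<Sum>b\<in>F. norm (snd b))"
  show ?thesis
  proof (rule that[of \<rho>])
    fix b assume b: "b \<in> Bonds" "norm (snd b) > \<rho>"
    have "b \<notin> F"
    proof
      assume "b \<in> F"
      then have "norm (snd b) \<le> \<rho>" unfolding \<rho>_def
        by (rule member_le_sum[OF _ _ fin, of _ "\<lambda>b. norm (snd b)"]) auto
      then show False using b by linarith
    qed
    then have "(Dif u b)\<^sup>2 < \<epsilon>\<^sup>2" using b unfolding F_def by auto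
    then show "\<bar>Dif u b\<bar> < \<epsilon>" using e power2_less_imp_less[of "\<bar>Dif u b\<bar>" \<epsilon>] by simp
  qed
qed

lemma bond_est:
  assumes sum: "(\<lambda>b. (Dif u b)\<^sup>2) summable_on Bonds"
    and B0: "B \<ge> 0"
    and lip: "\<And>x y. norm (x - y) \<le> 1/2 \<Longrightarrow> \<bar>\<eta> x - \<eta> y\<bar> \<le> B * norm (x - y)"
    and bd: "\<And>x. \<bar>\<eta> x\<bar> \<le> 1 + B"
    and one: "\<And>x. norm x \<le> 3/4 \<Longrightarrow> \<eta> x = 1"
    and zero: "\<And>x. norm x \<ge> 1 \<Longrightarrow> \<eta> x = 0"
    and b: "(xi, ze) \<in> Bonds" and R: "R > 2"
  shows "\<bar>Dif (truncR \<eta> R u) (xi, ze) - Dif u (xi, ze)\<bar>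
     \<le> (2 + B) * \<bar>Dif u (xi, ze)\<bar> * (if norm ze > 3 * R / 4 then 1 else 0)
        + B / R * (\<bar>z0\<bar> + 2 * \<bar>u p0\<bar> + 6 * sqrt (R + 2) * sqrt (normD2 u))"
proof -
  define c where "c = avgR R u"
  define G where "G = sqrt (normD2 u)"
  define K where "K = \<bar>z0\<bar> + 2 * \<bar>u p0\<bar> + 6 * sqrt (R + 2) * G"
  have G0: "G \<ge> 0" unfolding G_def using sq_le_normD2[OF sum, of "{}"] by simp
  have xiL: "xi \<in> Lat" and zeL: "ze \<in> Lat" and dxz: "dist xi ze = 1" using b by (auto simp: Bonds_iff)
  have split: "Dif (truncR \<eta> R u) (xi, ze) - Dif u (xi, ze)
     = (\<eta> (ze / of_real R) - 1) * Dif u (xi, ze) + (\<eta> (ze / of_real R) - \<eta> (xi / of_real R)) * (u xi - c)"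
    by (simp add: Dif_def truncR_def c_def algebra_simps)
  have t1: "\<bar>(\<eta> (ze / of_real R) - 1) * Dif u (xi, ze)\<bar> \<le> (2 + B) * \<bar>Dif u (xi, ze)\<bar> * (if norm ze > 3 * R / 4 then 1 else 0)"
  proof (cases "norm ze > 3 * R / 4")
    case True
    have "\<bar>\<eta> (ze / of_real R) - 1\<bar> \<le> 2 + B" using bd[of "ze / of_real R"] by linarith
    then show ?thesis using True by (simp add: abs_mult mult_right_mono)
  next
    case False
    then have "norm (ze / of_real R) \<le> 3/4" using R by (simp add: norm_divide divide_le_eq)
    then show ?thesis using one False by simp
  qed
  have t2: "\<bar>(\<eta> (ze / of_real R) - \<eta> (xi / of_real R)) * (u xi - c)\<bar> \<le> B / R * K"
  proof (cases "norm xi \<ge> R + 1")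
    case True
    have "norm ze \<ge> R" using True dxz norm_triangle_ineq2[of xi ze]
      by (simp add: dist_norm)
    then have "norm (ze / of_real R) \<ge> 1" "norm (xi / of_real R) \<ge> 1" using True R
      by (simp_all add: norm_divide le_divide_eq)
    then show ?thesis using zero B0 R K_def G0 by simp
  next
    case False
    have nd: "norm (ze / of_real R - xi / of_real R) = 1 / R"
      using dxz R by (simp add: dist_norm norm_divide norm_minus_commute diff_divide_distrib[symmetric])
    have e1: "\<bar>\<eta> (ze / of_real R) - \<eta> (xi / of_real R)\<bar> \<le> B / R"
      using lip[of "ze / of_real R" "xi / of_real R"] nd R by simp
    have g: "\<bar>u xi - u p0\<bar> \<le> 3 * sqrt (norm xi + 1) * G" using growth[OF sum xiL] G_def by simp
    have "3 * sqrt (norm xi + 1) * G \<le> 3 * sqrt (R + 2) * G" using False G0 by (intro mult_right_mono) auto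
    moreover have "\<bar>c\<bar> \<le> \<bar>z0\<bar> + \<bar>u p0\<bar> + 3 * sqrt (R + 2) * G"
      using avg_bound[OF sum, of R] R unfolding c_def G_def by simp
    ultimately have "\<bar>u xi - c\<bar> \<le> K" using g unfolding K_def by linarith
    then have "\<bar>\<eta> (ze / of_real R) - \<eta> (xi / of_real R)\<bar> * \<bar>u xi - c\<bar> \<le> B / R * K"
      using e1 by (intro mult_mono) auto
    then show ?thesis by (simp add: abs_mult)
  qed
  show ?thesis unfolding split using t1 t2 K_def G_def abs_triangle_ineq by (smt (verit))
qed



lemma lim_aux: "((\<lambda>R::real. sqrt (R + 2) / R) \<longlongrightarrow> 0) at_top" by real_asymp
lemma lim_aux2: "((\<lambda>R::real. 1 / R) \<longlongrightarrow> 0) at_top" by real_asymp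

lemma infsum_fin:
  assumes "finite T" "T \<subseteq> A" "\<And>x. x \<in> A - T \<Longrightarrow> g x = 0"
  shows "infsum g A = sum g T"
proof -
  have "infsum g A = infsum g T" by (rule infsum_cong_neutral) (use assms in auto)
  then show ?thesis using assms(1) by simp
qed

lemma cont_bdd:
  fixes f :: "real \<Rightarrow> real"
  assumes "continuous_on UNIV f"
  obtains M where "\<And>x. \<bar>x\<bar> \<le> r \<Longrightarrow> \<bar>f x\<bar> \<le> M"
proof -
  have "compact (f ` cball 0 r)" by (rule compact_continuous_image) (use assms continuous_on_subset in auto)
  then obtain M where M: "\<And>y. y \<in> f ` cball 0 r \<Longrightarrow> norm y \<le> M" using compact_imp_bounded bounded_iff by metis
  show ?thesis
  proof (rule that[of M])
    fix x :: real assume "\<bar>x\<bar> \<le> r"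
    then have "f x \<in> f ` cball 0 r" by auto
    then show "\<bar>f x\<bar> \<le> M" using M by fastforce
  qed
qed

lemma lim_K:
  "((\<lambda>R::real. B / R * (k0 + 6 * sqrt (R + 2) * G)) \<longlongrightarrow> 0) at_top"
proof -
  have "((\<lambda>R::real. (B * k0) * (1 / R) + (6 * B * G) * (sqrt (R + 2) / R)) \<longlongrightarrow> (B * k0) * 0 + (6 * B * G) * 0) at_top"
    by (intro tendsto_intros lim_aux lim_aux2)
  then show ?thesis by (simp add: algebra_simps add_divide_distrib)
qed

theorem mainTheorem7:
  fixes \<psi> :: "real \<Rightarrow> real" and \<eta> :: "complex \<Rightarrow> real"
    and u :: "complex \<Rightarrow> real" and lam_d :: real
  assumes psi_C4: "C_k 4 \<psi>"
    and psi_periodic: "\<forall>x. \<psi> (x + 1) = \<psi> x"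
    and psi_even: "\<forall>x. \<psi> (- x) = \<psi> x"
    and eta: "cutoff \<eta>"
    and lam_pos: "lam_d > 0"
    and u_W12: "u \<in> W12"
    and STAB: "strongly_stable \<psi> lam_d (\<lambda>x. yhat x + u x)"
  shows "\<exists>lam :: real \<Rightarrow> real.
           (\<forall>R>2. \<forall>v\<in>W0.
              hess \<psi> (\<lambda>x. yhat x + truncR \<eta> R u x) v v \<ge> lam R * normD2 v)
         \<and> (lam \<longlongrightarrow> lam_d) at_top"
proof -
  have sum: "(\<lambda>b. (Dif u b)\<^sup>2) summable_on Bonds" using u_W12 by (simp add: W12_def)
  obtain B where B0: "B \<ge> 0"
    and lip: "\<And>x y. norm (x - y) \<le> 1/2 \<Longrightarrow> \<bar>\<eta> x - \<eta> y\<bar> \<le> B * norm (x - y)"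
    and bd: "\<And>x. \<bar>\<eta> x\<bar> \<le> 1 + B"
    and one: "\<And>x. norm x \<le> 3/4 \<Longrightarrow> \<eta> x = 1"
    and zero: "\<And>x. norm x \<ge> 1 \<Longrightarrow> \<eta> x = 0"
    using eta_props[OF eta] by metis
  define f where "f = (deriv ^^ 2) \<psi>"
  have fc: "continuous_on UNIV f"
  proof -
    have "\<And>x. f differentiable (at x)" using psi_C4 unfolding C_k_def f_def by auto
    then show ?thesis
      by (intro continuous_at_imp_continuous_on) (auto intro: differentiable_imp_continuous_within)
  qed
  define G where "G = sqrt (normD2 u)"
  have G0: "G \<ge> 0" unfolding G_def using sq_le_normD2[OF sum, of "{}"] by simp
  have DuG: "\<bar>Dif u b\<bar> \<le> G" if "b \<in> Bonds" for b
  proof -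
    have "(Dif u b)\<^sup>2 \<le> normD2 u" using sq_le_normD2[OF sum, of "{b}"] that by simp
    then have "sqrt ((Dif u b)\<^sup>2) \<le> G" unfolding G_def using real_sqrt_le_mono by blast
    then show ?thesis by simp
  qed
  have yb: "\<bar>Dif yhat b\<bar> \<le> 1" for b
  proof -
    have "0 \<le> yhat x \<and> yhat x < 1" for x
      using Arg2pi[of x] pi_gt_zero unfolding yhat_def by (auto simp: divide_less_eq)
    then show ?thesis unfolding Dif_def by (smt (verit))
  qed
  define k0 where "k0 = \<bar>z0\<bar> + 2 * \<bar>u p0\<bar>"
  define T where "T R = (2 + B) * G + B / R * (k0 + 6 * sqrt (R + 2) * G)" for R
  define a where "a R b = Dif (\<lambda>x. yhat x + truncR \<eta> R u x) b" for R b
  define c where "c b = Dif (\<lambda>x. yhat x + u x) b" for b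
  have ac: "a R b - c b = Dif (truncR \<eta> R u) b - Dif u b" for R b by (simp add: a_def c_def Dif_def)
  have est: "\<bar>a R b - c b\<bar> \<le> (2 + B) * \<bar>Dif u b\<bar> * (if norm (snd b) > 3 * R / 4 then 1 else 0)
        + B / R * (k0 + 6 * sqrt (R + 2) * G)" if "R > 2" "b \<in> Bonds" for R b
  proof -
    obtain xi ze where b: "b = (xi, ze)" by (cases b)
    show ?thesis unfolding ac b k0_def G_def
      using bond_est[OF sum B0 lip bd one zero, of xi ze R] that b by (simp add: algebra_simps)
  qed
  have k00: "k0 \<ge> 0" unfolding k0_def by simp
  have tb: "\<bar>a R b - c b\<bar> \<le> T R" if "R > 2" "b \<in> Bonds" for R b
  proof -
    have "(2 + B) * \<bar>Dif u b\<bar> * (if norm (snd b) > 3 * R / 4 then 1 else 0) \<le> (2 + B) * G"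
      using DuG[OF that(2)] B0 by (auto intro: mult_left_mono)
    then show ?thesis using est[OF that] unfolding T_def by linarith
  qed
  have T0: "T R \<ge> 0" if "R > 2" for R
    unfolding T_def using B0 G0 k00 that by (intro add_nonneg_nonneg mult_nonneg_nonneg) auto
  have cb: "\<bar>c b\<bar> \<le> 1 + G" if "b \<in> Bonds" for b
  proof -
    have "c b = Dif yhat b + Dif u b" by (simp add: c_def Dif_def)
    then show ?thesis using yb[of b] DuG[OF that] by linarith
  qed
  define W where "W R = insert 0 {\<bar>f (a R b) - f (c b)\<bar> | b. b \<in> Bonds}" for R
  define \<omega> where "\<omega> R = Sup (W R)" for R
  have bdd: "bdd_above (W R)" if "R > 2" for R
  proof -
    obtain M where M: "\<And>x. \<bar>x\<bar> \<le> 1 + G + T R \<Longrightarrow> \<bar>f x\<bar> \<le> M" using cont_bdd[OF fc] by blast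
    have M0: "M \<ge> 0" using M[of 0] G0 T0[OF that] by force
    have "\<bar>f (a R b) - f (c b)\<bar> \<le> 2 * M" if "b \<in> Bonds" for b
    proof -
      have "\<bar>c b\<bar> \<le> 1 + G + T R" using cb[OF that] T0 \<open>R > 2\<close> by force
      moreover have "\<bar>a R b\<bar> \<le> 1 + G + T R" using cb[OF that] tb[OF \<open>R > 2\<close> that] by linarith
      ultimately show ?thesis using M by (smt (verit))
    qed
    then show ?thesis unfolding W_def bdd_above_def using M0
      by (intro exI[of _ "2 * M"]) auto
  qed
  have upper: "\<bar>f (a R b) - f (c b)\<bar> \<le> \<omega> R" if "R > 2" "b \<in> Bonds" for R b
  proof -
    have "\<bar>f (a R b) - f (c b)\<bar> \<in> W R" unfolding W_def using that(2) by blast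
    then show ?thesis unfolding \<omega>_def by (rule cSup_upper[OF _ bdd[OF that(1)]])
  qed
  have om0: "\<omega> R \<ge> 0" if "R > 2" for R
    unfolding \<omega>_def by (rule cSup_upper[OF _ bdd[OF that(1)]]) (auto simp: W_def)
  have main: "hess \<psi> (\<lambda>x. yhat x + truncR \<eta> R u x) v v \<ge> (lam_d - \<omega> R) * normD2 v"
    if R: "R > 2" and v: "v \<in> W0" for R v
  proof -
    define S where "S = {b \<in> Bonds. Dif v b \<noteq> 0}"
    have Sf: "finite S" unfolding S_def by (rule W0_finite[OF v])
    have h1: "hess \<psi> (\<lambda>x. yhat x + truncR \<eta> R u x) v v = (\<Sum>b\<in>S. f (a R b) * Dif v b * Dif v b)"
      unfolding hess_def f_def[symmetric] a_def by (rule infsum_fin[OF Sf]) (auto simp: S_def)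
    have h2: "hess \<psi> (\<lambda>x. yhat x + u x) v v = (\<Sum>b\<in>S. f (c b) * Dif v b * Dif v b)"
      unfolding hess_def f_def[symmetric] c_def by (rule infsum_fin[OF Sf]) (auto simp: S_def)
    have h3: "normD2 v = (\<Sum>b\<in>S. (Dif v b)\<^sup>2)"
      unfolding normD2_def by (rule infsum_fin[OF Sf]) (auto simp: S_def)
    have st: "hess \<psi> (\<lambda>x. yhat x + u x) v v \<ge> lam_d * normD2 v"
      using STAB v unfolding strongly_stable_def by blast
    have "(\<Sum>b\<in>S. f (a R b) * Dif v b * Dif v b) - (\<Sum>b\<in>S. f (c b) * Dif v b * Dif v b)
        = (\<Sum>b\<in>S. (f (a R b) - f (c b)) * (Dif v b)\<^sup>2)"
      by (simp add: sum_subtractf[symmetric] algebra_simps power2_eq_square)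
    also have "\<dots> \<ge> (\<Sum>b\<in>S. (- \<omega> R) * (Dif v b)\<^sup>2)"
    proof (rule sum_mono)
      fix b assume "b \<in> S"
      then have "b \<in> Bonds" by (simp add: S_def)
      then have "f (a R b) - f (c b) \<ge> - \<omega> R" using upper[OF R] by (smt (verit))
      then show "(- \<omega> R) * (Dif v b)\<^sup>2 \<le> (f (a R b) - f (c b)) * (Dif v b)\<^sup>2"
        by (intro mult_right_mono) auto
    qed
    finally have "(\<Sum>b\<in>S. f (a R b) * Dif v b * Dif v b) \<ge> (\<Sum>b\<in>S. f (c b) * Dif v b * Dif v b) - \<omega> R * normD2 v"
      unfolding h3 by (simp add: sum_distrib_left sum_negf)
    then show ?thesis using st h1 h2 by (simp add: algebra_simps)
  qed
  have lim: "(\<omega> \<longlongrightarrow> 0) at_top"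
  proof (rule tendstoI)
    fix e :: real assume e: "e > 0"
    have "uniformly_continuous_on (cball 0 (2 + G)) f"
      by (rule compact_uniformly_continuous) (use fc continuous_on_subset in auto)
    then obtain d where d: "d > 0" and dU: "\<And>x x'. x \<in> cball 0 (2 + G) \<Longrightarrow> x' \<in> cball 0 (2 + G) \<Longrightarrow>
        dist x' x < d \<Longrightarrow> dist (f x') (f x) < e / 2"
      unfolding uniformly_continuous_on_def using e by (metis half_gt_zero)
    define d' where "d' = min d 1"
    have d': "d' > 0" "d' \<le> d" "d' \<le> 1" using d by (auto simp: d'_def)
    obtain \<rho> where rho: "\<And>b. b \<in> Bonds \<Longrightarrow> norm (snd b) > \<rho> \<Longrightarrow> \<bar>Dif u b\<bar> < d' / (2 * (2 + B))"
      using du_decay[OF sum, of "d' / (2 * (2 + B))"] d' B0 by auto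
    have ev1: "eventually (\<lambda>R::real. R > 2) at_top" by (rule eventually_gt_at_top)
    have ev2: "eventually (\<lambda>R::real. R > 4 * \<bar>\<rho>\<bar> / 3) at_top" by (rule eventually_gt_at_top)
    have ev3: "eventually (\<lambda>R::real. B / R * (k0 + 6 * sqrt (R + 2) * G) < d' / 2) at_top"
      using order_tendstoD(2)[OF lim_K[of B k0 G], of "d' / 2"] d' by auto
    show "eventually (\<lambda>R. dist (\<omega> R) 0 < e) at_top"
      using ev1 ev2 ev3
    proof eventually_elim
      case (elim R)
      have close: "\<bar>f (a R b) - f (c b)\<bar> \<le> e / 2" if b: "b \<in> Bonds" for b
      proof -
        have "(2 + B) * \<bar>Dif u b\<bar> * (if norm (snd b) > 3 * R / 4 then 1 else 0) < d' / 2"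
        proof (cases "norm (snd b) > 3 * R / 4")
          case True
          then have "norm (snd b) > \<rho>" using elim(2) by linarith
          then have "\<bar>Dif u b\<bar> < d' / (2 * (2 + B))" using rho b by blast
          then have "(2 + B) * \<bar>Dif u b\<bar> < (2 + B) * (d' / (2 * (2 + B)))"
            using B0 by (intro mult_strict_left_mono) auto
          also have "\<dots> = d' / 2" using B0 by (simp add: field_simps)
          finally show ?thesis using True by simp
        qed (use d' in simp)
        then have ab: "\<bar>a R b - c b\<bar> < d'" using est[OF elim(1) b] elim(3) by linarith
        have c1: "c b \<in> cball 0 (2 + G)" using cb[OF b] by auto
        have a1: "a R b \<in> cball 0 (2 + G)" using cb[OF b] ab d' by auto
        have "dist (a R b) (c b) < d" using ab d' by (simp add: dist_real_def)
        then have "dist (f (a R b)) (f (c b)) < e / 2" using dU[OF c1 a1] by blast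
        then show ?thesis by (simp add: dist_real_def)
      qed
      have "\<omega> R \<le> e / 2" unfolding \<omega>_def
        by (rule cSup_least) (use close e in \<open>auto simp: W_def\<close>)
      then show ?case using om0[OF elim(1)] e by (simp add: dist_real_def)
    qed
  qed
  have "((\<lambda>R. lam_d - \<omega> R) \<longlongrightarrow> lam_d - 0) at_top" by (intro tendsto_intros lim)
  then show ?thesis using main by (intro exI[of _ "\<lambda>R. lam_d - \<omega> R"]) auto
qed


end
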